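(* Let $d>0$, let $\ell$ be a certified lower bound with certificate matrix $\Lambda$, and suppose $f(d,\ell)=1$. Let $j\in\{1,\dots,m\}$ satisfy $0<a_j^\top y(d,\ell)-u_j\le\gamma_j(d,\ell)$. Define $\ell^{(1)}:=\ell-\frac{2(t_j(d,\ell)-v_j(\ell))}{d_j\gamma_j(d,\ell)^2}e_j$ and suppose $f(d,\ell^{(1)})>0$. Define $d^{(1)}:=d/f(d,\ell^{(1)})$, $\ell^{(2)}:=\ell^{(1)}+\frac{2(2v_j(\ell^{(1)})-\gamma_j(d^{(1)},\ell^{(1)}))}{(m-1)d^{(1)}_j\gamma_j(d^{(1)},\ell^{(1)})^2+2}e_j$, $d^{(2)}:=d^{(1)}+\frac{2}{m-1}\frac{1}{\gamma_j(d^{(1)},\ell^{(1)})^2}e_j$, and $d^{(3)}:=d^{(2)}/f(d^{(2)},\ell^{(2)})$. Then there is a scalar $\alpha(d,\ell)>\frac{m^2-1}{m^2}$ such that $$d^{(3)}=\alpha(d,\ell)\Big(d+\frac{2}{m-1}\frac{1}{\gamma_j(d,\ell)^2}e_j\Big).$$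
   Context: Standing assumption: $A=[a_1|\cdots|a_m]\in\mathbb{R}^{n\times m}$ has columns of unit Euclidean norm and $\{A\lambda:\lambda\ge0\}=\mathbb{R}^n$; $u\in\mathbb{R}^m$. $D=\mathrm{diag}(d)$; $r(\ell)=\tfrac12(u+\ell)$, $v(\ell)=\tfrac12(u-\ell)$, $B(d)=ADA^\top$, $y(d,\ell)=B(d)^{-1}ADr(\ell)$, $t(d,\ell)=A^\top y(d,\ell)-r(\ell)$, $f(d,\ell)=v(\ell)^\top Dv(\ell)-t(d,\ell)^\top Dt(d,\ell)$, $\gamma_i(d,\ell)=\sqrt{f(d,\ell)a_i^\top B(d)^{-1}a_i}$ when $f(d,\ell)>0$. $\ell$ is a certified lower bound with certificate matrix $\Lambda\in\mathbb{R}^{m\times m}$ if $A\Lambda=-A$, $\Lambda\ge0$, $-\Lambda^\top u\ge\ell$. *)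

theory Defs
  imports "HOL-Analysis.Analysis"
begin

definition diagm :: "real^'m \<Rightarrow> real^'m^'m" where
  "diagm d = (\<chi> i k. if i = k then d $ i else 0)"

definition rvec :: "real^'m \<Rightarrow> real^'m \<Rightarrow> real^'m" where
  "rvec u l = (1/2) *\<^sub>R (u + l)"

definition vvec :: "real^'m \<Rightarrow> real^'m \<Rightarrow> real^'m" where
  "vvec u l = (1/2) *\<^sub>R (u - l)"

definition Bmat :: "real^'m^'n \<Rightarrow> real^'m \<Rightarrow> real^'n^'n" where
  "Bmat A d = A ** diagm d ** transpose A"

definition yvec :: "real^'m^'n \<Rightarrow> real^'m \<Rightarrow> real^'m \<Rightarrow> real^'m \<Rightarrow> real^'n" where
  "yvec A u d l = matrix_inv (Bmat A d) *v (A *v (diagm d *v rvec u l))"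

definition tvec :: "real^'m^'n \<Rightarrow> real^'m \<Rightarrow> real^'m \<Rightarrow> real^'m \<Rightarrow> real^'m" where
  "tvec A u d l = transpose A *v yvec A u d l - rvec u l"

definition fval :: "real^'m^'n \<Rightarrow> real^'m \<Rightarrow> real^'m \<Rightarrow> real^'m \<Rightarrow> real" where
  "fval A u d l = vvec u l \<bullet> (diagm d *v vvec u l) - tvec A u d l \<bullet> (diagm d *v tvec A u d l)"

text \<open>gamma_i(d,l) = sqrt(f(d,l) a_i^T B(d)^{-1} a_i); only meaningful when f(d,l) > 0.\<close>
definition gam :: "real^'m^'n \<Rightarrow> real^'m \<Rightarrow> real^'m \<Rightarrow> real^'m \<Rightarrow> 'm \<Rightarrow> real" where
  "gam A u d l i = sqrt (fval A u d l * (column i A \<bullet> (matrix_inv (Bmat A d) *v column i A)))"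

definition certified_lb :: "real^'m^'n \<Rightarrow> real^'m \<Rightarrow> real^'m \<Rightarrow> real^'m^'m \<Rightarrow> bool" where
  "certified_lb A u l \<Lambda> \<longleftrightarrow> A ** \<Lambda> = - A \<and> (\<forall>i k. \<Lambda> $ i $ k \<ge> 0)
     \<and> (\<forall>i. (- (transpose \<Lambda> *v u)) $ i \<ge> l $ i)"

end

theory Submission
  imports Defs
begin

lemma diagm_mv: "diagm d *v x = (\<chi> i. d $ i * x $ i)"
  unfolding diagm_def matrix_vector_mult_def vec_eq_iff
  by (simp add: if_distrib[where f="\<lambda>t. t * _"] cong: if_cong)

lemma tmv_comp: "(transpose A *v y) $ i = column i A \<bullet> y"
  by (simp add: matrix_vector_mult_def transpose_def column_def inner_vec_def mult.commute)

lemma mv_inner: fixes A :: "real^'m^'n" shows "(A *v x) \<bullet> y = x \<bullet> (transpose A *v y)"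
proof -
  have "(A *v x) \<bullet> y = (\<Sum>i\<in>UNIV. \<Sum>k\<in>UNIV. A $ i $ k * x $ k * y $ i)"
    by (simp add: matrix_vector_mult_def inner_vec_def sum_distrib_right)
  also have "\<dots> = (\<Sum>k\<in>UNIV. \<Sum>i\<in>UNIV. A $ i $ k * x $ k * y $ i)"
    by (rule sum.swap)
  also have "\<dots> = x \<bullet> (transpose A *v y)"
    by (simp add: matrix_vector_mult_def transpose_def inner_vec_def sum_distrib_left mult_ac
        del: transpose_matrix_vector)
  finally show ?thesis .
qed

lemma diag_inner: "(diagm d *v x) \<bullet> y = x \<bullet> (diagm d *v y)"
  by (simp add: diagm_mv inner_vec_def mult.commute mult.left_commute)

lemma Bmat_mv: "Bmat A d *v x = A *v (diagm d *v (transpose A *v x))"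
  by (simp add: Bmat_def matrix_vector_mul_assoc matrix_mul_assoc del: transpose_matrix_vector)

lemma transpose_diagm: "transpose (diagm d) = diagm d"
  by (simp add: transpose_def diagm_def vec_eq_iff)

lemma Bmat_sym: "(Bmat A d *v x) \<bullet> y = x \<bullet> (Bmat A d *v y)"
  unfolding Bmat_mv mv_inner diag_inner
  by (simp add: inner_commute transpose_diagm del: transpose_matrix_vector)

lemma inv_props: assumes "invertible B" shows "B ** matrix_inv B = mat 1 \<and> matrix_inv B ** B = mat 1"
  using assms unfolding invertible_def matrix_inv_def by (rule someI_ex)

lemma inv_solve: assumes "invertible B" "B *v y = w" shows "matrix_inv B *v w = y"
proof -
  have "matrix_inv B *v w = (matrix_inv B ** B) *v y" unfolding assms(2)[symmetric] by (rule matrix_vector_mul_assoc)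
  also have "\<dots> = y" using inv_props[OF assms(1)] by simp
  finally show ?thesis .
qed

lemma inv_works: assumes "invertible B" shows "B *v (matrix_inv B *v w) = w"
proof -
  have "B *v (matrix_inv B *v w) = (B ** matrix_inv B) *v w" by (simp add: matrix_vector_mul_assoc)
  also have "\<dots> = w" using inv_props[OF assms(1)] by simp
  finally show ?thesis .
qed

lemma Bmat_inv:
  fixes A :: "real^'m^'n"
  assumes pos_span: "{A *v lam | lam. \<forall>i. lam $ i \<ge> 0} = UNIV"
    and dpos: "\<forall>i. d $ i > 0"
  shows "invertible (Bmat A d)"
proof -
  have "\<forall>x. Bmat A d *v x = 0 \<longrightarrow> x = 0"
  proof (intro allI impI)
    fix x assume h: "Bmat A d *v x = 0"
    define q where "q = transpose A *v x"
    have "0 = x \<bullet> (Bmat A d *v x)" using h by simp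
    also have "\<dots> = (A *v (diagm d *v q)) \<bullet> x" unfolding Bmat_mv q_def by (rule inner_commute)
    also have "\<dots> = (diagm d *v q) \<bullet> q" unfolding q_def by (rule mv_inner)
    also have "\<dots> = (\<Sum>i\<in>UNIV. d $ i * (q $ i)^2)"
      unfolding diagm_mv inner_vec_def by (simp add: power2_eq_square mult.commute mult.left_commute)
    finally have s0: "(\<Sum>i\<in>UNIV. d $ i * (q $ i)^2) = 0" by simp
    have nn: "\<And>i. i \<in> UNIV \<Longrightarrow> 0 \<le> d $ i * (q $ i)^2" using dpos by (simp add: less_imp_le)
    have all0: "\<forall>i\<in>UNIV. d $ i * (q $ i)^2 = 0"
    proof -
      have fin: "finite (UNIV::'m set)" by simp
      show ?thesis using iffD1[OF sum_nonneg_eq_0_iff[OF fin nn] s0] .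
    qed
    have q0: "q = 0"
    proof (rule iffD2[OF vec_eq_iff], rule allI)
      fix i
      have "d $ i * (q $ i)^2 = 0" using all0 by simp
      then have "(q $ i)^2 = 0" using dpos by (metis less_irrefl mult_eq_0_iff)
      then show "q $ i = 0 $ i" by simp
    qed
    have "x \<in> {A *v lam | lam. \<forall>i. lam $ i \<ge> 0}" unfolding pos_span by (rule UNIV_I)
    then obtain lam where "x = A *v lam" by blast
    then have "x \<bullet> x = lam \<bullet> q" unfolding q_def by (metis mv_inner)
    then show "x = 0" using q0 by simp
  qed
  then show ?thesis
    unfolding invertible_left_inverse matrix_left_invertible_ker[symmetric] .
qed

lemma vr_identity: "vvec u l \<bullet> (diagm d *v vvec u l) - rvec u l \<bullet> (diagm d *v rvec u l) = - (u \<bullet> (diagm d *v l))"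
proof -
  have "vvec u l \<bullet> (diagm d *v vvec u l) - rvec u l \<bullet> (diagm d *v rvec u l)
     = (\<Sum>i\<in>UNIV. vvec u l $ i * (d $ i * vvec u l $ i) - rvec u l $ i * (d $ i * rvec u l $ i))"
    by (simp add: inner_vec_def diagm_mv sum_subtractf)
  also have "\<dots> = (\<Sum>i\<in>UNIV. - (u $ i * (d $ i * l $ i)))"
    by (rule sum.cong) (auto simp: vvec_def rvec_def algebra_simps power2_eq_square)
  also have "\<dots> = - (u \<bullet> (diagm d *v l))"
    by (simp add: inner_vec_def diagm_mv sum_negf)
  finally show ?thesis .
qed

lemma fval_formula:
  fixes A :: "real^'m^'n"
  assumes "invertible (Bmat A d)"
  shows "fval A u d l = - (u \<bullet> (diagm d *v l)) + (A *v (diagm d *v rvec u l)) \<bullet> yvec A u d l"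
proof -
  define y where "y = yvec A u d l"
  define r where "r = rvec u l"
  define w where "w = A *v (diagm d *v r)"
  define q where "q = transpose A *v y"
  have By: "Bmat A d *v y = w"
    unfolding y_def yvec_def w_def r_def using inv_works[OF assms] by blast
  have t: "tvec A u d l = q - r" unfolding tvec_def q_def y_def r_def ..
  have rq: "q \<bullet> (diagm d *v r) = r \<bullet> (diagm d *v q)"
    by (metis diag_inner inner_commute)
  have "tvec A u d l \<bullet> (diagm d *v tvec A u d l) = q \<bullet> (diagm d *v q) - 2 * (r \<bullet> (diagm d *v q)) + r \<bullet> (diagm d *v r)"
    unfolding t by (simp add: matrix_vector_mult_diff_distrib inner_diff_left inner_diff_right rq)
  moreover have "q \<bullet> (diagm d *v q) = y \<bullet> w"
  proof -
    have "(A *v (diagm d *v q)) \<bullet> y = (diagm d *v q) \<bullet> q"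
      by (simp only: mv_inner q_def)
    then have "q \<bullet> (diagm d *v q) = (A *v (diagm d *v q)) \<bullet> y"
      by (simp add: inner_commute)
    also have "\<dots> = w \<bullet> y" using By unfolding Bmat_mv q_def by simp
    finally show ?thesis by (simp add: inner_commute)
  qed
  moreover have "r \<bullet> (diagm d *v q) = y \<bullet> w"
  proof -
    have "(A *v (diagm d *v r)) \<bullet> y = (diagm d *v r) \<bullet> q"
      by (simp only: mv_inner q_def)
    then show ?thesis unfolding w_def by (metis diag_inner inner_commute)
  qed
  ultimately have "tvec A u d l \<bullet> (diagm d *v tvec A u d l) = r \<bullet> (diagm d *v r) - w \<bullet> y"
    by (simp add: inner_commute)
  then show ?thesis unfolding fval_def using vr_identity[of u l d]
    by (simp add: r_def w_def y_def)
qed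

lemma diagm_upd: "diagm (d + h *\<^sub>R axis j 1) *v x = diagm d *v x + (h * x $ j) *\<^sub>R axis j 1"
  by (simp add: diagm_mv vec_eq_iff axis_def algebra_simps)

lemma rvec_upd: "rvec u (l + e *\<^sub>R axis j 1) = rvec u l + (e/2) *\<^sub>R axis j 1"
  by (simp add: rvec_def vec_eq_iff axis_def algebra_simps)

lemma w_upd:
  "A *v (diagm (d + h *\<^sub>R axis j 1) *v rvec u (l + e *\<^sub>R axis j 1))
   = A *v (diagm d *v rvec u l) + (h * rvec u l $ j + (d $ j + h) * e / 2) *\<^sub>R column j A"
proof -
  have "diagm (d + h *\<^sub>R axis j 1) *v rvec u (l + e *\<^sub>R axis j 1)
      = diagm d *v rvec u l + (h * rvec u l $ j + (d $ j + h) * e / 2) *\<^sub>R axis j 1"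
    by (simp add: diagm_mv rvec_def vec_eq_iff axis_def algebra_simps)
  then show ?thesis
    by (simp add: matrix_vector_right_distrib matrix_vector_mult_scaleR matrix_vector_mult_basis)
qed

lemma ul_upd:
  "u \<bullet> (diagm (d + h *\<^sub>R axis j 1) *v (l + e *\<^sub>R axis j 1))
   = u \<bullet> (diagm d *v l) + u $ j * (h * l $ j + (d $ j + h) * e)"
proof -
  have "diagm (d + h *\<^sub>R axis j 1) *v (l + e *\<^sub>R axis j 1)
      = diagm d *v l + (h * l $ j + (d $ j + h) * e) *\<^sub>R axis j 1"
    by (simp add: diagm_mv vec_eq_iff axis_def algebra_simps)
  then show ?thesis
    by (simp add: inner_add_right inner_axis)
qed

lemma B_upd:
  fixes A :: "real^'m^'n"
  shows "Bmat A (d + h *\<^sub>R axis j 1) *v x = Bmat A d *v x + (h * (column j A \<bullet> x)) *\<^sub>R column j A"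
  unfolding Bmat_mv diagm_upd
  by (simp add: matrix_vector_right_distrib matrix_vector_mult_scaleR matrix_vector_mult_basis tmv_comp
       del: transpose_matrix_vector)

lemma diagm_scale: "diagm (c *\<^sub>R d) *v x = c *\<^sub>R (diagm d *v x)"
  by (simp add: diagm_mv vec_eq_iff)

lemma B_scale: "Bmat A (c *\<^sub>R d) *v x = c *\<^sub>R (Bmat A d *v x)"
  unfolding Bmat_mv diagm_scale by (simp add: matrix_vector_mult_scaleR)

lemma card_ge2:
  fixes A :: "real^'m^'n"
  assumes unit_cols: "\<forall>i. norm (column i A) = 1"
    and pos_span: "{A *v lam | lam. \<forall>i. lam $ i \<ge> 0} = UNIV"
  shows "CARD('m) \<ge> 2"
proof (rule ccontr)
  assume "\<not> CARD('m) \<ge> 2"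
  moreover have "0 < CARD('m)" by (simp add: card_gt_0_iff)
  ultimately have c1: "CARD('m) = 1" by linarith
  then obtain j :: 'm where Uj: "UNIV = {j}" using card_1_singletonE by blast
  let ?one = "(\<chi> i. (1::real)) :: real^'m"
  obtain lam where lam: "A *v lam = - (A *v ?one)" "\<forall>i. lam $ i \<ge> 0"
  proof -
    have "- (A *v ?one) \<in> {A *v lam | lam. \<forall>i. lam $ i \<ge> 0}" using pos_span by simp
    then obtain lam where "- (A *v ?one) = A *v lam" "\<forall>i. lam $ i \<ge> 0" by blast
    then show ?thesis using that by metis
  qed
  have mv: "A *v x = (x $ j) *\<^sub>R column j A" for x :: "real^'m"
    unfolding matrix_vector_mult_def column_def vec_eq_iff Uj by (simp add: mult.commute)
  have "lam $ j *\<^sub>R column j A = - (1 *\<^sub>R column j A)" using lam(1) unfolding mv by simp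
  then have "(lam $ j + 1) *\<^sub>R column j A = 0" unfolding scaleR_add_left
    by (simp only: eq_neg_iff_add_eq_0)
  moreover have "lam $ j + 1 > 0" using lam(2) by (simp add: add_nonneg_pos)
  ultimately have "column j A = 0" by simp
  then show False using unit_cols by (metis norm_zero zero_neq_one)
qed

lemma ii_gen:
  fixes U c h G2 Q :: real
  assumes Qd: "Q = 1 + h * G2" and Q: "Q \<noteq> 0"
  shows "1 - U * (2 * c - h * U) + ((c - h*U)/Q) * U + c * U + c * ((c - h*U)/Q) * G2 = 1 + G2 * (c - h*U)^2 / Q"
proof -
  define P where "P = 1 - U * (2 * c - h * U) + c * U"
  define R where "R = (c - h*U) * U + c * (c - h*U) * G2"
  have e: "P * Q + R = Q + G2 * (c - h*U)^2"
    unfolding P_def R_def Qd by (simp add: power2_eq_square algebra_simps)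
  have "1 - U * (2 * c - h * U) + ((c - h*U)/Q) * U + c * U + c * ((c - h*U)/Q) * G2 = P + R / Q"
    using Q unfolding P_def R_def by (simp add: field_simps)
  also have "\<dots> = (P * Q + R) / Q" using Q by (simp add: field_simps)
  also have "\<dots> = 1 + G2 * (c - h*U)^2 / Q" unfolding e using Q by (simp add: add_divide_distrib)
  finally show ?thesis .
qed

lemma alg:
  fixes U L D G k h e c \<beta> :: real
  assumes D: "D > 0" and G: "G > 0" and k: "k > 0"
    and h: "h = 2 / k * (1 / G^2)"
    and e: "e = 2 * (2 * ((U - L)/2) - G) / (k * D * G^2 + 2)"
    and c: "c = h * ((U + L)/2) + (D + h) * e / 2"
    and b: "\<beta> = (c - h * U) / (1 + h * G^2)"
  shows "1 - U * (h * L + (D + h) * e) + \<beta> * U + c * U + c * \<beta> * G^2 = (k+1)^2 / ((k+1)^2 - 1)"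
proof -
  have hg: "h * G^2 = 2 / k" using h G by (simp add: field_simps)
  have pos: "k * D * G^2 + 2 > 0" using D G k by (simp add: add_pos_pos)
  have Dh: "D + h = (k*D*G^2+2)/(k*G^2)" unfolding h using G k by (simp add: field_simps)
  have e': "e = 2*(U - L - G)/(k*D*G^2+2)" unfolding e by simp
  have gen: "N > 0 \<Longrightarrow> N/M * (2*X/N)/2 = X/M" for N M X :: real by (simp add: field_simps)
  have De: "(D+h)*e/2 = (U - L - G)/(k*G^2)" unfolding Dh e' by (rule gen[OF pos])
  have i: "c - h * U = - 1 / (k * G)"
  proof -
    have "c - h * U = h * ((L - U)/2) + (U - L - G)/(k*G^2)" unfolding c De by (simp add: field_simps)
    also have "\<dots> = - 1 / (k * G)" unfolding h using G k by (simp add: field_simps power2_eq_square)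
    finally show ?thesis .
  qed
  have ii: "1 - U * (h * L + (D + h) * e) + \<beta> * U + c * U + c * \<beta> * G^2 = 1 + G^2 * (c - h*U)^2 / (1 + h * G^2)"
  proof -
    have X: "h * L + (D + h) * e = 2 * c - h * U" unfolding c by (simp add: field_simps)
    have Q: "1 + h * G^2 > 0" unfolding hg using k by (simp add: add_pos_pos)
    show ?thesis unfolding X b by (rule ii_gen[OF refl]) (use Q in simp)
  qed
  have iii: "G^2 * (- 1 / (k * G))^2 = 1 / k^2" using G k by (simp add: field_simps power2_eq_square)
  have iv: "1 + (1 / k^2) / (1 + 2 / k) = (k+1)^2 / ((k+1)^2 - 1)"
  proof -
    have kk: "(k+1)^2 - 1 = k * (k + 2)" by (simp add: power2_eq_square algebra_simps)
    have kp: "k * k + k * 2 > 0" using k by (simp add: add_pos_pos)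
    have "1 + (1 / k^2) / (1 + 2 / k) = 1 + 1 / (k * (k+2))" using k by (simp add: field_simps power2_eq_square)
    also have "\<dots> = (k+1)^2 / ((k+1)^2 - 1)" unfolding kk using k kp by (simp add: field_simps power2_eq_square)
    finally show ?thesis .
  qed
  show ?thesis unfolding ii i hg iii iv ..
qed

theorem theorem7:
  fixes A :: "real^'m^'n" and u d l :: "real^'m" and \<Lambda> :: "real^'m^'m" and j :: 'm
  assumes unit_cols: "\<forall>i. norm (column i A) = 1"
    and pos_span: "{A *v lam | lam. \<forall>i. lam $ i \<ge> 0} = UNIV"
    and dpos: "\<forall>i. d $ i > 0"
    and cert: "certified_lb A u l \<Lambda>"
    and f1: "fval A u d l = 1"
    and hj: "0 < column j A \<bullet> yvec A u d l - u $ j"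
            "column j A \<bullet> yvec A u d l - u $ j \<le> gam A u d l j"
  defines "l1 \<equiv> l - (2 * (tvec A u d l $ j - vvec u l $ j) / (d $ j * (gam A u d l j)\<^sup>2)) *\<^sub>R axis j 1"
  assumes f_l1: "fval A u d l1 > 0"
  defines "d1 \<equiv> (1 / fval A u d l1) *\<^sub>R d"
  defines "l2 \<equiv> l1 + (2 * (2 * vvec u l1 $ j - gam A u d1 l1 j)
                   / ((real CARD('m) - 1) * d1 $ j * (gam A u d1 l1 j)\<^sup>2 + 2)) *\<^sub>R axis j 1"
    and "d2 \<equiv> d1 + (2 / (real CARD('m) - 1) * (1 / (gam A u d1 l1 j)\<^sup>2)) *\<^sub>R axis j 1"
  defines "d3 \<equiv> (1 / fval A u d2 l2) *\<^sub>R d2"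
  shows "\<exists>\<alpha>::real. \<alpha> > ((real CARD('m))\<^sup>2 - 1) / (real CARD('m))\<^sup>2 \<and>
           d3 = \<alpha> *\<^sub>R (d + (2 / (real CARD('m) - 1) * (1 / (gam A u d l j)\<^sup>2)) *\<^sub>R axis j 1)"
proof -
  let ?a = "column j A"
  define k where "k = real CARD('m) - 1"
  have k: "k > 0" using card_ge2[OF unit_cols pos_span] by (simp add: k_def)
  define B where "B = Bmat A d"
  have invB: "invertible B" unfolding B_def by (rule Bmat_inv[OF pos_span dpos])
  define y where "y = yvec A u d l"
  define w where "w = A *v (diagm d *v rvec u l)"
  define z where "z = matrix_inv B *v ?a"
  define g where "g = ?a \<bullet> z"
  have By: "B *v y = w" unfolding y_def yvec_def w_def B_def using inv_works[OF invB[unfolded B_def]] by blast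
  have Bz: "B *v z = ?a" unfolding z_def using inv_works[OF invB] .
  have Bsym: "(B *v x) \<bullet> x' = x \<bullet> (B *v x')" for x x' unfolding B_def by (rule Bmat_sym)
  have f_form: "- (u \<bullet> (diagm d *v l)) + w \<bullet> y = 1"
    using fval_formula[OF invB[unfolded B_def], of u l] f1 by (simp add: w_def y_def)
  have gam0: "gam A u d l j = sqrt g" unfolding gam_def f1 g_def z_def B_def by simp
  define s where "s = ?a \<bullet> y - u $ j"
  have s: "0 < s" "s \<le> sqrt g" using hj gam0 unfolding s_def y_def by auto
  have g: "g > 0" using s by (metis less_le_trans real_sqrt_gt_0_iff)
  have gam0sq: "(gam A u d l j)^2 = g" using gam0 g by simp
  have ts: "tvec A u d l $ j - vvec u l $ j = s"
    unfolding tvec_def s_def y_def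
    by (simp add: tmv_comp rvec_def vvec_def del: transpose_matrix_vector) (simp add: algebra_simps)
  define \<delta> where "\<delta> = 2 * s / (d $ j * g)"
  have l1e: "l1 = l + (- \<delta>) *\<^sub>R axis j 1" unfolding l1_def \<delta>_def ts gam0sq by (simp add: algebra_simps)
  define c1 where "c1 = d $ j * (- \<delta>) / 2"
  define y1 where "y1 = y + c1 *\<^sub>R z"
  define w1 where "w1 = A *v (diagm d *v rvec u l1)"
  have w1: "w1 = w + c1 *\<^sub>R ?a"
    using w_upd[of A d 0 j u l "-\<delta>"] unfolding w1_def l1e w_def c1_def by simp
  have By1: "B *v y1 = w1" unfolding y1_def w1
    by (simp add: matrix_vector_right_distrib matrix_vector_mult_scaleR By Bz)
  have y1: "yvec A u d l1 = y1" unfolding yvec_def using inv_solve[OF invB By1] by (simp add: B_def w1_def)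
  have wz: "w \<bullet> z = y \<bullet> ?a" using Bsym[of y z] By Bz by simp
  have ul1: "u \<bullet> (diagm d *v l1) = u \<bullet> (diagm d *v l) + u$j * (d$j * (-\<delta>))"
    using ul_upd[of u d 0 j l "-\<delta>"] unfolding l1e by simp
  define \<phi> where "\<phi> = fval A u d l1"
  have fl1: "\<phi> = - (u \<bullet> (diagm d *v l1)) + w1 \<bullet> y1"
    unfolding \<phi>_def using fval_formula[OF invB[unfolded B_def], of u l1] y1 w1_def by simp
  have ay: "?a \<bullet> y = s + u $ j" by (simp add: s_def)
  have \<phi>_eq: "\<phi> = 1 - s^2/g"
  proof -
    have "\<phi> = -(u \<bullet> (diagm d *v l)) + w \<bullet> y - u$j*(d$j*(-\<delta>)) + c1 * (w \<bullet> z) + c1 * (?a \<bullet> y) + c1^2 * g"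
      unfolding fl1 ul1 w1 y1_def
      by (simp add: inner_add_left inner_add_right g_def algebra_simps power2_eq_square inner_commute)
    also have "\<dots> = 1 - u$j*(d$j*(-\<delta>)) + 2*c1*(s + u $ j) + c1^2*g"
      using f_form wz ay by (simp add: inner_commute)
    also have "\<dots> = 1 - s^2/g" unfolding c1_def \<delta>_def using g dpos[rule_format, of j]
      by (simp add: field_simps power2_eq_square)
    finally show ?thesis .
  qed
  have \<phi>pos: "\<phi> > 0" using f_l1 \<phi>_def by simp
  have \<phi>lt1: "\<phi> < 1" using \<phi>_eq s g by simp
  have p: "?a \<bullet> y1 = u $ j"
    unfolding y1_def c1_def \<delta>_def using g dpos[rule_format, of j] ay
    by (simp add: inner_add_right inner_diff_right g_def field_simps)
  have d1e: "d1 = (1/\<phi>) *\<^sub>R d" by (simp add: d1_def \<phi>_def)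
  have d1pos: "\<forall>i. d1 $ i > 0" using dpos \<phi>pos by (simp add: d1e)
  define B1 where "B1 = Bmat A d1"
  have invB1: "invertible B1" unfolding B1_def by (rule Bmat_inv[OF pos_span d1pos])
  have B1x: "B1 *v x = (1/\<phi>) *\<^sub>R (B *v x)" for x unfolding B1_def B_def d1e by (rule B_scale)
  define w1' where "w1' = A *v (diagm d1 *v rvec u l1)"
  have w1': "w1' = (1/\<phi>) *\<^sub>R w1" unfolding w1'_def w1_def d1e diagm_scale by (simp add: matrix_vector_mult_scaleR)
  have By1': "B1 *v y1 = w1'" using B1x By1 w1' by simp
  have y1': "yvec A u d1 l1 = y1" unfolding yvec_def using inv_solve[OF invB1 By1'] by (simp add: B1_def w1'_def)
  have ud1: "u \<bullet> (diagm d1 *v l1) = (1/\<phi>) * (u \<bullet> (diagm d *v l1))" unfolding d1e diagm_scale by simp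
  have fd1form: "- (u \<bullet> (diagm d1 *v l1)) + w1' \<bullet> y1 = 1"
    unfolding ud1 w1' using fl1 \<phi>pos by (simp add: field_simps)
  have f_d1: "fval A u d1 l1 = 1"
    using fval_formula[OF invB1[unfolded B1_def], of u l1] fd1form y1' by (simp add: w1'_def)
  define z1 where "z1 = \<phi> *\<^sub>R z"
  have B1z1: "B1 *v z1 = ?a" unfolding z1_def B1x using \<phi>pos by (simp add: matrix_vector_mult_scaleR Bz)
  have z1: "matrix_inv B1 *v ?a = z1" by (rule inv_solve[OF invB1 B1z1])
  have az1: "?a \<bullet> z1 = \<phi> * g" by (simp add: z1_def g_def)
  define G where "G = gam A u d1 l1 j"
  have G: "G = sqrt (\<phi> * g)" unfolding G_def gam_def f_d1 B1_def[symmetric] z1 az1 by simp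
  have Gpos: "G > 0" using G \<phi>pos g by simp
  have G2: "G^2 = \<phi> * g" using G \<phi>pos g by simp
  define h where "h = 2 / (real CARD('m) - 1) * (1 / G^2)"
  define e where "e = 2 * (2 * vvec u l1 $ j - G) / ((real CARD('m) - 1) * d1 $ j * G^2 + 2)"
  have l2e: "l2 = l1 + e *\<^sub>R axis j 1" unfolding l2_def e_def G_def ..
  have d2e: "d2 = d1 + h *\<^sub>R axis j 1" unfolding d2_def h_def G_def ..
  have hpos: "h > 0" unfolding h_def using k Gpos by (simp add: k_def)
  define c where "c = h * rvec u l1 $ j + (d1 $ j + h) * e / 2"
  define w2 where "w2 = A *v (diagm d2 *v rvec u l2)"
  have w2: "w2 = w1' + c *\<^sub>R ?a" unfolding w2_def d2e l2e w1'_def c_def by (rule w_upd)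
  define B2 where "B2 = Bmat A d2"
  have B2x: "B2 *v x = B1 *v x + (h * (?a \<bullet> x)) *\<^sub>R ?a" for x
    unfolding B2_def B1_def d2e by (rule B_upd)
  have d2pos: "\<forall>i. d2 $ i > 0" using d1pos hpos by (auto simp: d2e axis_def add_pos_pos)
  have invB2: "invertible B2" unfolding B2_def by (rule Bmat_inv[OF pos_span d2pos])
  define \<beta> where "\<beta> = (c - h * u$j) / (1 + h * G^2)"
  define y2 where "y2 = y1 + \<beta> *\<^sub>R z1"
  have den: "1 + h * G^2 > 0" using hpos by (simp add: add_pos_nonneg)
  have By2: "B2 *v y2 = w2"
  proof -
    have s1: "B1 *v y2 = w1' + \<beta> *\<^sub>R ?a" unfolding y2_def
      by (simp only: matrix_vector_right_distrib matrix_vector_mult_scaleR By1' B1z1)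
    have s2: "?a \<bullet> y2 = u$j + \<beta> * G^2" unfolding y2_def
      by (simp only: inner_add_right inner_scaleR_right p az1 G2)
    have "B2 *v y2 = w1' + (\<beta> + h * (u$j + \<beta> * G^2)) *\<^sub>R ?a"
      unfolding B2x s1 s2 by (simp only: scaleR_add_left add.assoc)
    also have "\<beta> + h * (u$j + \<beta> * G^2) = c"
    proof -
      have "\<beta> * (1 + h * G^2) = c - h * u$j" unfolding \<beta>_def using den by simp
      then show ?thesis by (simp add: algebra_simps)
    qed
    finally show ?thesis using w2 by simp
  qed
  have y2: "yvec A u d2 l2 = y2" unfolding yvec_def using inv_solve[OF invB2 By2] by (simp add: B2_def w2_def)
  have w1'z1: "w1' \<bullet> z1 = u$j"
  proof -
    have "(B1 *v y1) \<bullet> z1 = y1 \<bullet> (B1 *v z1)" unfolding B1_def by (rule Bmat_sym)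
    then show ?thesis using By1' B1z1 p by (simp add: inner_commute)
  qed
  have ud2: "u \<bullet> (diagm d2 *v l2) = u \<bullet> (diagm d1 *v l1) + u$j * (h * l1$j + (d1$j + h)*e)"
    unfolding d2e l2e by (rule ul_upd)
  have f2: "fval A u d2 l2 = 1 - u$j*(h*l1$j + (d1$j+h)*e) + \<beta>*u$j + c*u$j + c*\<beta>*G^2"
  proof -
    have "fval A u d2 l2 = - (u \<bullet> (diagm d2 *v l2)) + w2 \<bullet> y2"
      using fval_formula[OF invB2[unfolded B2_def], of u l2] unfolding y2 w2_def[symmetric] .
    also have "\<dots> = (- (u \<bullet> (diagm d1 *v l1)) + w1' \<bullet> y1) - u$j*(h*l1$j + (d1$j+h)*e)
         + \<beta> * (w1' \<bullet> z1) + c * (?a \<bullet> y1) + c * \<beta> * (?a \<bullet> z1)"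
    proof -
      have ip: "w2 \<bullet> y2 = w1' \<bullet> y1 + \<beta> * (w1' \<bullet> z1) + c * (?a \<bullet> y1) + c * \<beta> * (?a \<bullet> z1)"
        unfolding w2 y2_def
        by (simp only: inner_add_left inner_add_right inner_scaleR_left inner_scaleR_right mult.assoc add.assoc distrib_left)
          (simp add: algebra_simps)
      show ?thesis unfolding ip ud2 by (simp add: algebra_simps)
    qed
    also have "\<dots> = 1 - u$j*(h*l1$j + (d1$j+h)*e) + \<beta>*u$j + c*u$j + c*\<beta>*G^2"
      unfolding fd1form w1'z1 p az1 G2 by simp
    finally show ?thesis .
  qed
  have d1j: "d1 $ j > 0" using d1pos by simp
  have f2v: "fval A u d2 l2 = (k+1)^2/((k+1)^2 - 1)"
    unfolding f2
    by (rule alg[OF d1j Gpos k])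
       (simp_all add: h_def e_def c_def \<beta>_def k_def vvec_def rvec_def)
  have mk: "real CARD('m) = k + 1" by (simp add: k_def)
  define \<alpha> where "\<alpha> = ((k+1)^2 - 1) / ((k+1)^2 * \<phi>)"
  have kp: "k * k + k * 2 > 0" using k by (simp add: add_pos_pos)
  have kk: "(k+1)^2 - 1 > 0" using kp by (simp add: power2_eq_square algebra_simps)
  show ?thesis
  proof (intro exI conjI)
    show "\<alpha> > ((real CARD('m))\<^sup>2 - 1) / (real CARD('m))\<^sup>2"
    proof -
      have M: "(k+1)^2 > 0" using k by simp
      have h1: "(k + 1)\<^sup>2 * \<phi> < (k + 1)\<^sup>2" using M \<phi>lt1 by simp
      have h2: "0 < (k + 1)\<^sup>2 * ((k + 1)\<^sup>2 * \<phi>)" using M \<phi>pos by simp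
      have "((k+1)^2-1)/(k+1)^2 < ((k+1)^2-1)/((k+1)^2*\<phi>)" by (rule divide_strict_left_mono[OF h1 kk h2])
      then show ?thesis unfolding mk \<alpha>_def .
    qed
    show "d3 = \<alpha> *\<^sub>R (d + (2 / (real CARD('m) - 1) * (1 / (gam A u d l j)\<^sup>2)) *\<^sub>R axis j 1)"
    proof -
      define F where "F = (k+1)^2/((k+1)^2 - 1)"
      define X where "X = 2 / k * (1 / g)"
      have Fpos: "F > 0" unfolding F_def using kk k by (simp add: divide_pos_pos)
      have e1: "(1/F) * (1/\<phi>) = \<alpha>" unfolding F_def \<alpha>_def using kk \<phi>pos by (simp add: field_simps)
      have e2: "(1/F) * h = \<alpha> * X" unfolding h_def G2 F_def \<alpha>_def X_def k_def[symmetric]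
        using kk \<phi>pos g k by (simp add: field_simps)
      have "d3 = (1/F) *\<^sub>R ((1/\<phi>) *\<^sub>R d + h *\<^sub>R axis j 1)"
      proof -
        have "d3 = (1/F) *\<^sub>R d2" unfolding d3_def f2v F_def[symmetric] ..
        then show ?thesis unfolding d2e d1e .
      qed
      also have "\<dots> = ((1/F) * (1/\<phi>)) *\<^sub>R d + ((1/F) * h) *\<^sub>R axis j 1"
        by (simp only: scaleR_add_right scaleR_scaleR)
      also have "\<dots> = \<alpha> *\<^sub>R (d + X *\<^sub>R axis j 1)"
        unfolding e1 e2 by (simp only: scaleR_add_right scaleR_scaleR)
      finally show ?thesis unfolding X_def gam0sq k_def .
    qed
  qed
qed

end
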